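(* The Cut Rule \[ \frac{\Gamma_1\Rightarrow \phi \qquad \Gamma_2,\phi \Rightarrow \Delta}{\Gamma_1,\Gamma_2 \Rightarrow \Delta} \] is admissible in the sequent calculus $\mathsf{G3iLL}$; that is, for all finite multisets of formulas $\Gamma_1,\Gamma_2$, every formula $\phi$ and every multiset $\Delta$ containing at most one formula, if $\Gamma_1\Rightarrow\phi$ and $\Gamma_2,\phi\Rightarrow\Delta$ are derivable in $\mathsf{G3iLL}$, then $\Gamma_1,\Gamma_2\Rightarrow\Delta$ is derivable in $\mathsf{G3iLL}$.
   Context: Formulas of the language of propositional Lax Logic are built from the constant $\bot$ and propositional atoms $p,q,\dots$ (with $\bot$ not an atom) using the binary connectives $\wedge,\vee,\to$ and a unary modal operator $\bigcirc$. A sequent is an expression $\Gamma\Rightarrow\Delta$ with $\Gamma,\Delta$ finite multisets of formulas and $\Delta$ containing at most one formula; $\Gamma,\Pi$ denotes multiset union. The calculus $\mathsf{G3iLL}$ has the axioms $\Gamma,p\Rightarrow p$ ($p$ an atom) and $\Gamma,\bot\Rightarrow\Delta$, and the rules (premisses / conclusion): $R\wedge$: $\Gamma\Rightarrow\phi$ and $\Gamma\Rightarrow\psi$ / $\Gamma\Rightarrow\phi\wedge\psi$; $L\wedge$: $\Gamma,\phi,\psi\Rightarrow\Delta$ / $\Gamma,\phi\wedge\psi\Rightarrow\Delta$; $R\vee$: $\Gamma\Rightarrow\phi_i$ / $\Gamma\Rightarrow\phi_0\vee\phi_1$ ($i=0,1$); $L\vee$: $\Gamma,\phi\Rightarrow\Delta$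 and $\Gamma,\psi\Rightarrow\Delta$ / $\Gamma,\phi\vee\psi\Rightarrow\Delta$; $R\to$: $\Gamma,\phi\Rightarrow\psi$ / $\Gamma\Rightarrow\phi\to\psi$; $L\to$: $\Gamma,\phi\to\psi\Rightarrow\phi$ and $\Gamma,\psi\Rightarrow\Delta$ / $\Gamma,\phi\to\psi\Rightarrow\Delta$; $R\bigcirc$: $\Gamma\Rightarrow\phi$ / $\Gamma\Rightarrow\bigcirc\phi$; $L\bigcirc$: $\Gamma,\psi\Rightarrow\bigcirc\phi$ / $\Gamma,\bigcirc\psi\Rightarrow\bigcirc\phi$. *)

theory Defs
  imports Main "HOL-Library.Multiset"
begin

datatype 'a fm =
    Bot
  | Atom 'a
  | Conj "'a fm" "'a fm"
  | Disj "'a fm" "'a fm"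
  | Imp "'a fm" "'a fm"
  | Circ "'a fm"

text \<open>A sequent Gamma => Delta: Gamma a finite multiset, Delta a multiset with at most one
formula, represented as an option (None = empty succedent).\<close>
inductive G3iLL :: "'a fm multiset \<Rightarrow> 'a fm option \<Rightarrow> bool" where
  Ax:   "G3iLL (add_mset (Atom p) \<Gamma>) (Some (Atom p))"
| LBot: "G3iLL (add_mset Bot \<Gamma>) \<Delta>"
| RConj: "G3iLL \<Gamma> (Some \<phi>) \<Longrightarrow> G3iLL \<Gamma> (Some \<psi>) \<Longrightarrow> G3iLL \<Gamma> (Some (Conj \<phi> \<psi>))"
| LConj: "G3iLL (add_mset \<phi> (add_mset \<psi> \<Gamma>)) \<Delta> \<Longrightarrow> G3iLL (add_mset (Conj \<phi> \<psi>) \<Gamma>) \<Delta>"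
| RDisj0: "G3iLL \<Gamma> (Some \<phi>) \<Longrightarrow> G3iLL \<Gamma> (Some (Disj \<phi> \<psi>))"
| RDisj1: "G3iLL \<Gamma> (Some \<psi>) \<Longrightarrow> G3iLL \<Gamma> (Some (Disj \<phi> \<psi>))"
| LDisj: "G3iLL (add_mset \<phi> \<Gamma>) \<Delta> \<Longrightarrow> G3iLL (add_mset \<psi> \<Gamma>) \<Delta> \<Longrightarrow>
          G3iLL (add_mset (Disj \<phi> \<psi>) \<Gamma>) \<Delta>"
| RImp: "G3iLL (add_mset \<phi> \<Gamma>) (Some \<psi>) \<Longrightarrow> G3iLL \<Gamma> (Some (Imp \<phi> \<psi>))"
| LImp: "G3iLL (add_mset (Imp \<phi> \<psi>) \<Gamma>) (Some \<phi>) \<Longrightarrow> G3iLL (add_mset \<psi> \<Gamma>) \<Delta> \<Longrightarrow>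
          G3iLL (add_mset (Imp \<phi> \<psi>) \<Gamma>) \<Delta>"
| RCirc: "G3iLL \<Gamma> (Some \<phi>) \<Longrightarrow> G3iLL \<Gamma> (Some (Circ \<phi>))"
| LCirc: "G3iLL (add_mset \<psi> \<Gamma>) (Some (Circ \<phi>)) \<Longrightarrow> G3iLL (add_mset (Circ \<psi>) \<Gamma>) (Some (Circ \<phi>))"

end

theory Submission
  imports Defs
begin

lemma Ax_m: "Atom p \<in># \<Gamma> \<Longrightarrow> G3iLL \<Gamma> (Some (Atom p))"
  by (metis G3iLL.Ax insert_DiffM)
lemma LBot_m: "Bot \<in># \<Gamma> \<Longrightarrow> G3iLL \<Gamma> \<Delta>"
  by (metis G3iLL.LBot insert_DiffM)

lemma weak: "G3iLL \<Gamma> \<Delta> \<Longrightarrow> G3iLL (\<Gamma> + \<Sigma>) \<Delta>"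
  by (induction rule: G3iLL.induct) (auto intro: G3iLL.intros)

lemma bot_any: "G3iLL \<Gamma> \<Delta>' \<Longrightarrow> \<Delta>' = Some Bot \<Longrightarrow> G3iLL \<Gamma> \<Delta>"
  by (induction rule: G3iLL.induct) (auto intro: G3iLL.intros)


lemma mseq: "G3iLL \<Gamma> \<Delta> \<Longrightarrow> \<Gamma> = \<Gamma>' \<Longrightarrow> G3iLL \<Gamma>' \<Delta>" by simp


lemma diff_in[simp]: "X \<in># N \<Longrightarrow> add_mset C N - {#X#} = add_mset C (N - {#X#})"
  by (auto simp: multiset_eq_iff count_eq_zero_iff[symmetric] simp del: count_eq_zero_iff)

lemma inv_gen:
  assumes "G3iLL \<Gamma>' \<Delta>" "X \<in># \<Gamma>'" "X \<noteq> Bot" "\<And>p. X \<noteq> Atom p"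
  and pc: "\<And>\<phi> \<psi> \<Gamma> \<Delta>. X = Conj \<phi> \<psi> \<Longrightarrow> G3iLL (add_mset \<phi> (add_mset \<psi> \<Gamma>)) \<Delta> \<Longrightarrow> G3iLL (M + \<Gamma>) \<Delta>"
  and pd: "\<And>\<phi> \<psi> \<Gamma> \<Delta>. X = Disj \<phi> \<psi> \<Longrightarrow> G3iLL (add_mset \<phi> \<Gamma>) \<Delta> \<Longrightarrow> G3iLL (add_mset \<psi> \<Gamma>) \<Delta> \<Longrightarrow> G3iLL (M + \<Gamma>) \<Delta>"
  and pi: "\<And>\<phi> \<psi> \<Gamma> \<Delta>. X = Imp \<phi> \<psi> \<Longrightarrow> G3iLL (add_mset X \<Gamma>) (Some \<phi>) \<Longrightarrow> G3iLL (add_mset \<psi> \<Gamma>) \<Delta> \<Longrightarrow> G3iLL (M + \<Gamma>) \<Delta>"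
  and po: "\<And>\<phi> \<psi> \<Gamma>. X = Circ \<psi> \<Longrightarrow> G3iLL (add_mset \<psi> \<Gamma>) (Some (Circ \<phi>)) \<Longrightarrow> G3iLL (M + \<Gamma>) (Some (Circ \<phi>))"
  shows "G3iLL (M + (\<Gamma>' - {#X#})) \<Delta>"
  using assms(1,2)
proof (induction rule: G3iLL.induct)
  case (Ax p \<Gamma>) then show ?case using assms(4) by (auto intro: Ax_m)
next
  case (LBot \<Gamma> \<Delta>) then show ?case using assms(3) by (auto intro: LBot_m)
next
  case (RConj \<Gamma> \<phi> \<psi>) then show ?case by (auto intro: G3iLL.RConj)
next
  case (LConj \<phi> \<psi> \<Gamma> \<Delta>) then show ?case by (auto intro: G3iLL.LConj pc)
next
  case (RDisj0 \<Gamma> \<phi> \<psi>) then show ?case by (auto intro: G3iLL.RDisj0)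
next
  case (RDisj1 \<Gamma> \<psi> \<phi>) then show ?case by (auto intro: G3iLL.RDisj1)
next
  case (LDisj \<phi> \<Gamma> \<Delta> \<psi>) then show ?case by (auto intro: G3iLL.LDisj pd)
next
  case (RImp \<phi> \<Gamma> \<psi>) then show ?case by (auto intro: G3iLL.RImp)
next
  case (LImp \<phi> \<psi> \<Gamma> \<Delta>) then show ?case by (auto intro: G3iLL.LImp pi)
next
  case (RCirc \<Gamma> \<phi>) then show ?case by (auto intro: G3iLL.RCirc)
next
  case (LCirc \<psi> \<Gamma> \<phi>) then show ?case by (auto intro: G3iLL.LCirc po)
qed

lemma inv_conj: "G3iLL (add_mset (Conj A B) \<Gamma>) \<Delta> \<Longrightarrow> G3iLL (add_mset A (add_mset B \<Gamma>)) \<Delta>"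
  using inv_gen[of "add_mset (Conj A B) \<Gamma>" \<Delta> "Conj A B" "{#A, B#}"] by auto
lemma inv_disj1: "G3iLL (add_mset (Disj A B) \<Gamma>) \<Delta> \<Longrightarrow> G3iLL (add_mset A \<Gamma>) \<Delta>"
  using inv_gen[of "add_mset (Disj A B) \<Gamma>" \<Delta> "Disj A B" "{#A#}"] by auto
lemma inv_disj2: "G3iLL (add_mset (Disj A B) \<Gamma>) \<Delta> \<Longrightarrow> G3iLL (add_mset B \<Gamma>) \<Delta>"
  using inv_gen[of "add_mset (Disj A B) \<Gamma>" \<Delta> "Disj A B" "{#B#}"] by auto
lemma inv_imp: "G3iLL (add_mset (Imp A B) \<Gamma>) \<Delta> \<Longrightarrow> G3iLL (add_mset B \<Gamma>) \<Delta>"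
  using inv_gen[of "add_mset (Imp A B) \<Gamma>" \<Delta> "Imp A B" "{#B#}"] by auto
lemma inv_circ: "G3iLL (add_mset (Circ A) \<Gamma>) \<Delta> \<Longrightarrow> G3iLL (add_mset A \<Gamma>) \<Delta>"
  using inv_gen[of "add_mset (Circ A) \<Gamma>" \<Delta> "Circ A" "{#A#}"] by auto

lemma cnt_mem: "2 \<le> count \<Gamma> A \<Longrightarrow> A \<in># \<Gamma>"
  by (metis not_in_iff not_numeral_le_zero)

lemma contr_step:
  fixes A :: "'a fm"
  assumes IHA: "\<And>(B::'a fm) \<Gamma> \<Delta>. size B < size A \<Longrightarrow> G3iLL (add_mset B (add_mset B \<Gamma>)) \<Delta> \<Longrightarrow> G3iLL (add_mset B \<Gamma>) \<Delta>"
  shows "G3iLL \<Gamma>' \<Delta> \<Longrightarrow> 2 \<le> count \<Gamma>' A \<Longrightarrow> G3iLL (\<Gamma>' - {#A#}) \<Delta>"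
proof (induction rule: G3iLL.induct)
  case (Ax p \<Gamma>)
  then show ?case by (cases "Atom p = A") (auto intro!: Ax_m dest: cnt_mem)
next
  case (LBot \<Gamma> \<Delta>)
  then show ?case by (cases "Bot = A") (auto intro!: LBot_m dest: cnt_mem)
next
  case (RConj \<Gamma> \<phi> \<psi>) then show ?case by (auto intro: G3iLL.RConj)
next
  case (RDisj0 \<Gamma> \<phi> \<psi>) then show ?case by (auto intro: G3iLL.RDisj0)
next
  case (RDisj1 \<Gamma> \<psi> \<phi>) then show ?case by (auto intro: G3iLL.RDisj1)
next
  case (RImp \<phi> \<Gamma> \<psi>)
  then have "A \<in># \<Gamma>" by (auto dest: cnt_mem)
  with RImp show ?case by (auto intro: G3iLL.RImp)
next
  case (RCirc \<Gamma> \<phi>) then show ?case by (auto intro: G3iLL.RCirc)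
next
  case (LConj C D \<Gamma> \<Delta>)
  show ?case
  proof (cases "Conj C D = A")
    case False
    with LConj.prems have c: "2 \<le> count \<Gamma> A" by simp
    then have "A \<in># \<Gamma>" by (rule cnt_mem)
    with LConj c show ?thesis by (auto intro: G3iLL.LConj)
  next
    case True
    with LConj.prems have "A \<in># \<Gamma>" by (simp add: not_in_iff[symmetric])
    then obtain R where R: "\<Gamma> = add_mset A R" by (metis insert_DiffM)
    have IC: "\<And>\<Gamma> \<Delta>. G3iLL (add_mset C (add_mset C \<Gamma>)) \<Delta> \<Longrightarrow> G3iLL (add_mset C \<Gamma>) \<Delta>"
      using IHA[of C] True by auto
    have ID: "\<And>\<Gamma> \<Delta>. G3iLL (add_mset D (add_mset D \<Gamma>)) \<Delta> \<Longrightarrow> G3iLL (add_mset D \<Gamma>) \<Delta>"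
      using IHA[of D] True by auto
    from LConj.hyps(1) have "G3iLL (add_mset (Conj C D) (add_mset C (add_mset D R))) \<Delta>"
      using R True by (simp add: add_mset_commute)
    then have "G3iLL (add_mset C (add_mset D (add_mset C (add_mset D R)))) \<Delta>" by (rule inv_conj)
    then have "G3iLL (add_mset C (add_mset C (add_mset D (add_mset D R)))) \<Delta>" by (simp add: add_mset_commute)
    then have "G3iLL (add_mset C (add_mset D (add_mset D R))) \<Delta>" by (rule IC)
    then have "G3iLL (add_mset D (add_mset D (add_mset C R))) \<Delta>" by (simp add: add_mset_commute)
    then have "G3iLL (add_mset D (add_mset C R)) \<Delta>" by (rule ID)
    then have "G3iLL (add_mset C (add_mset D R)) \<Delta>" by (simp add: add_mset_commute)
    then have "G3iLL (add_mset (Conj C D) R) \<Delta>" by (rule G3iLL.LConj)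
    then show ?thesis using R True by simp
  qed
next
  case (LDisj C \<Gamma> \<Delta> D)
  show ?case
  proof (cases "Disj C D = A")
    case False
    with LDisj.prems have c: "2 \<le> count \<Gamma> A" by simp
    then have "A \<in># \<Gamma>" by (rule cnt_mem)
    with LDisj c show ?thesis by (auto intro: G3iLL.LDisj)
  next
    case True
    with LDisj.prems have "A \<in># \<Gamma>" by (simp add: not_in_iff[symmetric])
    then obtain R where R: "\<Gamma> = add_mset A R" by (metis insert_DiffM)
    have IC: "\<And>\<Gamma> \<Delta>. G3iLL (add_mset C (add_mset C \<Gamma>)) \<Delta> \<Longrightarrow> G3iLL (add_mset C \<Gamma>) \<Delta>"
      using IHA[of C] True by auto
    have ID: "\<And>\<Gamma> \<Delta>. G3iLL (add_mset D (add_mset D \<Gamma>)) \<Delta> \<Longrightarrow> G3iLL (add_mset D \<Gamma>) \<Delta>"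
      using IHA[of D] True by auto
    from LDisj.hyps(1) have "G3iLL (add_mset (Disj C D) (add_mset C R)) \<Delta>"
      using R True by (simp add: add_mset_commute)
    then have "G3iLL (add_mset C (add_mset C R)) \<Delta>" by (rule inv_disj1)
    then have 1: "G3iLL (add_mset C R) \<Delta>" by (rule IC)
    from LDisj.hyps(2) have "G3iLL (add_mset (Disj C D) (add_mset D R)) \<Delta>"
      using R True by (simp add: add_mset_commute)
    then have "G3iLL (add_mset D (add_mset D R)) \<Delta>" by (rule inv_disj2)
    then have 2: "G3iLL (add_mset D R) \<Delta>" by (rule ID)
    from 1 2 have "G3iLL (add_mset (Disj C D) R) \<Delta>" by (rule G3iLL.LDisj)
    then show ?thesis using R True by simp
  qed
next
  case (LImp C D \<Gamma> \<Delta>)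
  show ?case
  proof (cases "Imp C D = A")
    case False
    with LImp.prems have c: "2 \<le> count \<Gamma> A" by simp
    then have "A \<in># \<Gamma>" by (rule cnt_mem)
    with LImp c show ?thesis by (auto intro: G3iLL.LImp)
  next
    case True
    with LImp.prems have "A \<in># \<Gamma>" by (simp add: not_in_iff[symmetric])
    then obtain R where R: "\<Gamma> = add_mset A R" by (metis insert_DiffM)
    have ID: "\<And>\<Gamma> \<Delta>. G3iLL (add_mset D (add_mset D \<Gamma>)) \<Delta> \<Longrightarrow> G3iLL (add_mset D \<Gamma>) \<Delta>"
      using IHA[of D] True by auto
    have 1: "G3iLL (add_mset (Imp C D) R) (Some C)"
      using LImp.IH(1) LImp.prems R True by simp
    from LImp.hyps(2) have "G3iLL (add_mset (Imp C D) (add_mset D R)) \<Delta>"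
      using R True by (simp add: add_mset_commute)
    then have "G3iLL (add_mset D (add_mset D R)) \<Delta>" by (rule inv_imp)
    then have 2: "G3iLL (add_mset D R) \<Delta>" by (rule ID)
    from 1 2 have "G3iLL (add_mset (Imp C D) R) \<Delta>" by (rule G3iLL.LImp)
    then show ?thesis using R True by simp
  qed
next
  case (LCirc C \<Gamma> \<phi>)
  show ?case
  proof (cases "Circ C = A")
    case False
    with LCirc.prems have c: "2 \<le> count \<Gamma> A" by simp
    then have "A \<in># \<Gamma>" by (rule cnt_mem)
    with LCirc c show ?thesis by (auto intro: G3iLL.LCirc)
  next
    case True
    with LCirc.prems have "A \<in># \<Gamma>" by (simp add: not_in_iff[symmetric])
    then obtain R where R: "\<Gamma> = add_mset A R" by (metis insert_DiffM)
    have IC: "\<And>\<Gamma> \<Delta>. G3iLL (add_mset C (add_mset C \<Gamma>)) \<Delta> \<Longrightarrow> G3iLL (add_mset C \<Gamma>) \<Delta>"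
      using IHA[of C] True by auto
    from LCirc.hyps(1) have "G3iLL (add_mset (Circ C) (add_mset C R)) (Some (Circ \<phi>))"
      using R True by (simp add: add_mset_commute)
    then have "G3iLL (add_mset C (add_mset C R)) (Some (Circ \<phi>))" by (rule inv_circ)
    then have "G3iLL (add_mset C R) (Some (Circ \<phi>))" by (rule IC)
    then have "G3iLL (add_mset (Circ C) R) (Some (Circ \<phi>))" by (rule G3iLL.LCirc)
    then show ?thesis using R True by simp
  qed
qed

lemma contr: "G3iLL (add_mset A (add_mset A \<Gamma>)) \<Delta> \<Longrightarrow> G3iLL (add_mset A \<Gamma>) \<Delta>"
proof (induction A arbitrary: \<Gamma> \<Delta> rule: measure_induct_rule[of size])
  case (less A)
  have "G3iLL (add_mset A (add_mset A \<Gamma>) - {#A#}) \<Delta>"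
    by (rule contr_step[OF less.IH less.prems]) simp_all
  then show ?case by simp
qed

lemma contr_ms: "G3iLL (\<Sigma> + \<Sigma> + \<Gamma>) \<Delta> \<Longrightarrow> G3iLL (\<Sigma> + \<Gamma>) \<Delta>"
proof (induction \<Sigma> arbitrary: \<Gamma>)
  case empty then show ?case by simp
next
  case (add x S)
  from add.prems have "G3iLL (add_mset x (add_mset x (S + S + \<Gamma>))) \<Delta>" by simp
  then have "G3iLL (add_mset x (S + S + \<Gamma>)) \<Delta>" by (rule contr)
  then have "G3iLL (S + S + add_mset x \<Gamma>) \<Delta>" by simp
  then have "G3iLL (S + add_mset x \<Gamma>) \<Delta>" by (rule add.IH)
  then show ?case by simp
qed

inductive G3h :: "nat \<Rightarrow> 'a fm multiset \<Rightarrow> 'a fm option \<Rightarrow> bool" where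
  hAx:   "G3h n (add_mset (Atom p) \<Gamma>) (Some (Atom p))"
| hLBot: "G3h n (add_mset Bot \<Gamma>) \<Delta>"
| hRConj: "G3h n \<Gamma> (Some \<phi>) \<Longrightarrow> G3h m \<Gamma> (Some \<psi>) \<Longrightarrow> G3h (Suc (max n m)) \<Gamma> (Some (Conj \<phi> \<psi>))"
| hLConj: "G3h n (add_mset \<phi> (add_mset \<psi> \<Gamma>)) \<Delta> \<Longrightarrow> G3h (Suc n) (add_mset (Conj \<phi> \<psi>) \<Gamma>) \<Delta>"
| hRDisj0: "G3h n \<Gamma> (Some \<phi>) \<Longrightarrow> G3h (Suc n) \<Gamma> (Some (Disj \<phi> \<psi>))"
| hRDisj1: "G3h n \<Gamma> (Some \<psi>) \<Longrightarrow> G3h (Suc n) \<Gamma> (Some (Disj \<phi> \<psi>))"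
| hLDisj: "G3h n (add_mset \<phi> \<Gamma>) \<Delta> \<Longrightarrow> G3h m (add_mset \<psi> \<Gamma>) \<Delta> \<Longrightarrow>
          G3h (Suc (max n m)) (add_mset (Disj \<phi> \<psi>) \<Gamma>) \<Delta>"
| hRImp: "G3h n (add_mset \<phi> \<Gamma>) (Some \<psi>) \<Longrightarrow> G3h (Suc n) \<Gamma> (Some (Imp \<phi> \<psi>))"
| hLImp: "G3h n (add_mset (Imp \<phi> \<psi>) \<Gamma>) (Some \<phi>) \<Longrightarrow> G3h m (add_mset \<psi> \<Gamma>) \<Delta> \<Longrightarrow>
          G3h (Suc (max n m)) (add_mset (Imp \<phi> \<psi>) \<Gamma>) \<Delta>"
| hRCirc: "G3h n \<Gamma> (Some \<phi>) \<Longrightarrow> G3h (Suc n) \<Gamma> (Some (Circ \<phi>))"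
| hLCirc: "G3h n (add_mset \<psi> \<Gamma>) (Some (Circ \<phi>)) \<Longrightarrow> G3h (Suc n) (add_mset (Circ \<psi>) \<Gamma>) (Some (Circ \<phi>))"

lemma h_sound: "G3h n \<Gamma> \<Delta> \<Longrightarrow> G3iLL \<Gamma> \<Delta>"
  by (induction rule: G3h.induct) (auto intro: G3iLL.intros)

lemma h_complete: "G3iLL \<Gamma> \<Delta> \<Longrightarrow> \<exists>n. G3h n \<Gamma> \<Delta>"
  by (induction rule: G3iLL.induct) (blast intro: G3h.intros)+

lemma weak_l: "G3iLL \<Gamma> \<Delta> \<Longrightarrow> G3iLL (\<Sigma> + \<Gamma>) \<Delta>"
  using weak[of \<Gamma> \<Delta> \<Sigma>] by (simp add: add.commute)


lemma left_an:
  assumes L: "G3h n1 \<Gamma>1 (Some \<phi>)" and R: "G3iLL (add_mset \<phi> \<Gamma>2) \<Delta>"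
  and IHL: "\<And>m \<Gamma>1'. m < n1 \<Longrightarrow> G3h m \<Gamma>1' (Some \<phi>) \<Longrightarrow> G3iLL (\<Gamma>1' + \<Gamma>2) \<Delta>"
  and circ: "\<And>\<psi>. \<phi> = Circ \<psi> \<Longrightarrow> \<exists>\<chi>. \<Delta> = Some (Circ \<chi>)"
  shows "G3iLL (\<Gamma>1 + \<Gamma>2) \<Delta> \<or> (\<exists>A B. \<phi> = Conj A B \<and> G3iLL \<Gamma>1 (Some A) \<and> G3iLL \<Gamma>1 (Some B))
    \<or> (\<exists>A B. \<phi> = Disj A B \<and> (G3iLL \<Gamma>1 (Some A) \<or> G3iLL \<Gamma>1 (Some B)))
    \<or> (\<exists>A B. \<phi> = Imp A B \<and> G3iLL (add_mset A \<Gamma>1) (Some B))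
    \<or> (\<exists>A. \<phi> = Circ A \<and> G3iLL \<Gamma>1 (Some A))"
  using L
proof cases
  case (hAx p K)
  have "G3iLL (K + add_mset (Atom p) \<Gamma>2) \<Delta>" using R hAx by (intro weak_l) simp
  then show ?thesis using hAx by simp
next
  case (hLBot K)
  then show ?thesis by (auto intro: G3iLL.LBot)
next
  case hRConj
  then show ?thesis by (auto dest: h_sound)
next
  case (hLConj n C D K)
  have "G3iLL (add_mset C (add_mset D K) + \<Gamma>2) \<Delta>" using IHL[of n "add_mset C (add_mset D K)"] hLConj by auto
  then show ?thesis using hLConj by (auto intro: G3iLL.LConj)
next
  case hRDisj0
  then show ?thesis by (auto dest: h_sound)
next
  case hRDisj1
  then show ?thesis by (auto dest: h_sound)
next
  case (hLDisj n C K m D)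
  have "G3iLL (add_mset C K + \<Gamma>2) \<Delta>" "G3iLL (add_mset D K + \<Gamma>2) \<Delta>"
    using IHL[of n "add_mset C K"] IHL[of m "add_mset D K"] hLDisj by auto
  then show ?thesis using hLDisj by (auto intro: G3iLL.LDisj)
next
  case hRImp
  then show ?thesis by (auto dest: h_sound)
next
  case (hLImp n C D K m)
  have 2: "G3iLL (add_mset D K + \<Gamma>2) \<Delta>" using IHL[of m "add_mset D K"] hLImp by auto
  have "G3iLL (add_mset (Imp C D) K + \<Gamma>2) (Some C)" using weak[OF h_sound[OF hLImp(3)], of \<Gamma>2] hLImp by simp
  with 2 show ?thesis using hLImp by (auto intro: G3iLL.LImp)
next
  case hRCirc
  then show ?thesis by (auto dest: h_sound)
next
  case (hLCirc n C K \<psi>)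
  then obtain \<chi> where \<chi>: "\<Delta> = Some (Circ \<chi>)" using circ by auto
  have "G3iLL (add_mset C K + \<Gamma>2) \<Delta>" using IHL[of n "add_mset C K"] hLCirc by auto
  then show ?thesis using hLCirc \<chi> by (auto intro: G3iLL.LCirc)
qed

lemma split_eq:
  assumes "add_mset X K = add_mset \<phi> \<Gamma>2"
  obtains "X = \<phi>" "K = \<Gamma>2" | K' where "K = add_mset \<phi> K'" "\<Gamma>2 = add_mset X K'"
  using assms by (auto simp: add_eq_conv_ex)

lemma cut_step:
  fixes \<phi> :: "'a fm"
  assumes IHF: "\<And>(\<psi>::'a fm) \<Gamma>1 \<Gamma>2 \<Delta>. size \<psi> < size \<phi> \<Longrightarrow> G3iLL \<Gamma>1 (Some \<psi>) \<Longrightarrow> G3iLL (add_mset \<psi> \<Gamma>2) \<Delta> \<Longrightarrow> G3iLL (\<Gamma>1 + \<Gamma>2) \<Delta>"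
  shows "G3h n1 \<Gamma>1 (Some \<phi>) \<Longrightarrow> G3h n2 (add_mset \<phi> \<Gamma>2) \<Delta> \<Longrightarrow> G3iLL (\<Gamma>1 + \<Gamma>2) \<Delta>"
proof (induction "n1 + n2" arbitrary: n1 n2 \<Gamma>1 \<Gamma>2 \<Delta> rule: less_induct)
  case less
  note L = less.prems(1) and R = less.prems(2)
  have IHR: "G3iLL (\<Gamma>1 + \<Gamma>2') \<Delta>'" if "m < n2" "G3h m (add_mset \<phi> \<Gamma>2') \<Delta>'" for m \<Gamma>2' \<Delta>'
    using less.hyps[of n1 m \<Gamma>1 \<Gamma>2' \<Delta>'] L that by simp
  have IHL: "G3iLL (\<Gamma>1' + \<Gamma>2) \<Delta>" if "m < n1" "G3h m \<Gamma>1' (Some \<phi>)" for m \<Gamma>1'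
    using less.hyps[of m n2 \<Gamma>1' \<Gamma>2 \<Delta>] R that by simp
  have Lp: "G3iLL \<Gamma>1 (Some \<phi>)" using L by (rule h_sound)
  have Rp: "G3iLL (add_mset \<phi> \<Gamma>2) \<Delta>" using R by (rule h_sound)
  from R show ?case
  proof cases
    case (hAx p K)
    show ?thesis
    proof (rule split_eq[OF hAx(1)[symmetric]])
      assume "Atom p = \<phi>" "K = \<Gamma>2"
      then show ?thesis using weak[OF Lp, of \<Gamma>2] hAx by simp
    next
      fix K' assume "\<Gamma>2 = add_mset (Atom p) K'"
      then show ?thesis using hAx by (auto intro: Ax_m)
    qed
  next
    case (hLBot K)
    show ?thesis
    proof (rule split_eq[OF hLBot(1)[symmetric]])
      assume "Bot = \<phi>" "K = \<Gamma>2"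
      then show ?thesis using weak[OF Lp, of \<Gamma>2] bot_any by blast
    next
      fix K' assume "\<Gamma>2 = add_mset Bot K'"
      then show ?thesis by (auto intro: LBot_m)
    qed
  next
    case (hRConj n A m B)
    then show ?thesis using IHR[of n \<Gamma>2 "Some A"] IHR[of m \<Gamma>2 "Some B"] by (auto intro: G3iLL.RConj)
  next
    case (hRDisj0 n A B)
    then show ?thesis using IHR[of n \<Gamma>2 "Some A"] by (auto intro: G3iLL.RDisj0)
  next
    case (hRDisj1 n B A)
    then show ?thesis using IHR[of n \<Gamma>2 "Some B"] by (auto intro: G3iLL.RDisj1)
  next
    case (hRImp n A B)
    have "G3h n (add_mset \<phi> (add_mset A \<Gamma>2)) (Some B)" using hRImp by (simp add: add_mset_commute)
    then have "G3iLL (\<Gamma>1 + add_mset A \<Gamma>2) (Some B)" using IHR[of n "add_mset A \<Gamma>2" "Some B"] hRImp by auto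
    then show ?thesis using hRImp by (auto intro: G3iLL.RImp)
  next
    case (hRCirc n A)
    then show ?thesis using IHR[of n \<Gamma>2 "Some A"] by (auto intro: G3iLL.RCirc)
  next
    case (hLConj n C D K)
    show ?thesis
    proof (rule split_eq[OF hLConj(2)[symmetric]])
      assume e: "Conj C D = \<phi>" "K = \<Gamma>2"
      have "G3iLL (\<Gamma>1 + \<Gamma>2) \<Delta> \<or> (G3iLL \<Gamma>1 (Some C) \<and> G3iLL \<Gamma>1 (Some D))"
        using left_an[OF L Rp IHL] e by auto
      moreover
      { assume c: "G3iLL \<Gamma>1 (Some C)" and d: "G3iLL \<Gamma>1 (Some D)"
        have p: "G3iLL (add_mset C (add_mset D \<Gamma>2)) \<Delta>" using hLConj e by (auto dest: h_sound)
        have "G3iLL (\<Gamma>1 + add_mset D \<Gamma>2) \<Delta>" using IHF[OF _ c p] e by auto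
        then have "G3iLL (add_mset D (\<Gamma>1 + \<Gamma>2)) \<Delta>" by simp
        then have "G3iLL (\<Gamma>1 + (\<Gamma>1 + \<Gamma>2)) \<Delta>" using IHF[OF _ d] e by auto
        then have "G3iLL (\<Gamma>1 + \<Gamma>1 + \<Gamma>2) \<Delta>" by (simp add: add.assoc)
        then have "G3iLL (\<Gamma>1 + \<Gamma>2) \<Delta>" by (rule contr_ms) }
      ultimately show ?thesis by blast
    next
      fix K' assume e: "K = add_mset \<phi> K'" "\<Gamma>2 = add_mset (Conj C D) K'"
      have "G3h n (add_mset \<phi> (add_mset C (add_mset D K'))) \<Delta>" using hLConj e by (simp add: add_mset_commute)
      then have "G3iLL (\<Gamma>1 + add_mset C (add_mset D K')) \<Delta>" using IHR[of n "add_mset C (add_mset D K')" \<Delta>] hLConj by auto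
      then show ?thesis using e by (auto intro: G3iLL.LConj)
    qed
  next
    case (hLDisj n C K m D)
    show ?thesis
    proof (rule split_eq[OF hLDisj(2)[symmetric]])
      assume e: "Disj C D = \<phi>" "K = \<Gamma>2"
      have "G3iLL (\<Gamma>1 + \<Gamma>2) \<Delta> \<or> G3iLL \<Gamma>1 (Some C) \<or> G3iLL \<Gamma>1 (Some D)"
        using left_an[OF L Rp IHL] e by auto
      moreover
      { assume c: "G3iLL \<Gamma>1 (Some C)"
        have p: "G3iLL (add_mset C \<Gamma>2) \<Delta>" using hLDisj e by (auto dest: h_sound)
        have "G3iLL (\<Gamma>1 + \<Gamma>2) \<Delta>" using IHF[OF _ c p] e by auto }
      moreover
      { assume c: "G3iLL \<Gamma>1 (Some D)"
        have p: "G3iLL (add_mset D \<Gamma>2) \<Delta>" using hLDisj e by (auto dest: h_sound)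
        have "G3iLL (\<Gamma>1 + \<Gamma>2) \<Delta>" using IHF[OF _ c p] e by auto }
      ultimately show ?thesis by blast
    next
      fix K' assume e: "K = add_mset \<phi> K'" "\<Gamma>2 = add_mset (Disj C D) K'"
      have "G3h n (add_mset \<phi> (add_mset C K')) \<Delta>" using hLDisj e by (simp add: add_mset_commute)
      then have 1: "G3iLL (\<Gamma>1 + add_mset C K') \<Delta>" using IHR[of n "add_mset C K'" \<Delta>] hLDisj by auto
      have "G3h m (add_mset \<phi> (add_mset D K')) \<Delta>" using hLDisj e by (simp add: add_mset_commute)
      then have 2: "G3iLL (\<Gamma>1 + add_mset D K') \<Delta>" using IHR[of m "add_mset D K'" \<Delta>] hLDisj by auto
      show ?thesis using 1 2 e by (auto intro: G3iLL.LDisj)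
    qed
  next
    case (hLImp n C D K m)
    show ?thesis
    proof (rule split_eq[OF hLImp(2)[symmetric]])
      assume e: "Imp C D = \<phi>" "K = \<Gamma>2"
      have "G3iLL (\<Gamma>1 + \<Gamma>2) \<Delta> \<or> G3iLL (add_mset C \<Gamma>1) (Some D)"
        using left_an[OF L Rp IHL] e by auto
      moreover
      { assume c: "G3iLL (add_mset C \<Gamma>1) (Some D)"
        have "G3h n (add_mset \<phi> \<Gamma>2) (Some C)" using hLImp e by simp
        then have 1: "G3iLL (\<Gamma>1 + \<Gamma>2) (Some C)" using IHR[of n \<Gamma>2 "Some C"] hLImp by auto
        have q: "G3iLL ((\<Gamma>1 + \<Gamma>2) + \<Gamma>1) (Some D)" using IHF[OF _ 1 c] e by auto
        have p: "G3iLL (add_mset D \<Gamma>2) \<Delta>" using hLImp e by (auto dest: h_sound)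
        have "G3iLL (((\<Gamma>1 + \<Gamma>2) + \<Gamma>1) + \<Gamma>2) \<Delta>" using IHF[OF _ q p] e by auto
        then have "G3iLL ((\<Gamma>1 + \<Gamma>2) + (\<Gamma>1 + \<Gamma>2) + {#}) \<Delta>" by (simp add: ac_simps)
        then have "G3iLL ((\<Gamma>1 + \<Gamma>2) + {#}) \<Delta>" by (rule contr_ms)
        then have "G3iLL (\<Gamma>1 + \<Gamma>2) \<Delta>" by simp }
      ultimately show ?thesis by blast
    next
      fix K' assume e: "K = add_mset \<phi> K'" "\<Gamma>2 = add_mset (Imp C D) K'"
      have "G3h n (add_mset \<phi> (add_mset (Imp C D) K')) (Some C)" using hLImp e by (simp add: add_mset_commute)
      then have 1: "G3iLL (\<Gamma>1 + add_mset (Imp C D) K') (Some C)" using IHR[of n "add_mset (Imp C D) K'" "Some C"] hLImp by auto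
      have "G3h m (add_mset \<phi> (add_mset D K')) \<Delta>" using hLImp e by (simp add: add_mset_commute)
      then have 2: "G3iLL (\<Gamma>1 + add_mset D K') \<Delta>" using IHR[of m "add_mset D K'" \<Delta>] hLImp by auto
      show ?thesis using 1 2 e by (auto intro: G3iLL.LImp)
    qed
  next
    case (hLCirc n C K \<chi>)
    show ?thesis
    proof (rule split_eq[OF hLCirc(2)[symmetric]])
      assume e: "Circ C = \<phi>" "K = \<Gamma>2"
      have "G3iLL (\<Gamma>1 + \<Gamma>2) \<Delta> \<or> G3iLL \<Gamma>1 (Some C)"
        using left_an[OF L Rp IHL] e hLCirc by auto
      moreover
      { assume c: "G3iLL \<Gamma>1 (Some C)"
        have p: "G3iLL (add_mset C \<Gamma>2) \<Delta>" using hLCirc e by (auto dest: h_sound)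
        have "G3iLL (\<Gamma>1 + \<Gamma>2) \<Delta>" using IHF[OF _ c p] e by auto }
      ultimately show ?thesis by blast
    next
      fix K' assume e: "K = add_mset \<phi> K'" "\<Gamma>2 = add_mset (Circ C) K'"
      have "G3h n (add_mset \<phi> (add_mset C K')) (Some (Circ \<chi>))" using hLCirc e by (simp add: add_mset_commute)
      then have "G3iLL (\<Gamma>1 + add_mset C K') (Some (Circ \<chi>))" using IHR[of n "add_mset C K'" "Some (Circ \<chi>)"] hLCirc by auto
      then show ?thesis using e hLCirc by (auto intro: G3iLL.LCirc)
    qed
  qed
qed

lemma cut: "G3iLL \<Gamma>1 (Some \<phi>) \<Longrightarrow> G3iLL (add_mset \<phi> \<Gamma>2) \<Delta> \<Longrightarrow> G3iLL (\<Gamma>1 + \<Gamma>2) \<Delta>"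
proof (induction \<phi> arbitrary: \<Gamma>1 \<Gamma>2 \<Delta> rule: measure_induct_rule[of size])
  case (less \<phi>)
  obtain n1 n2 where "G3h n1 \<Gamma>1 (Some \<phi>)" "G3h n2 (add_mset \<phi> \<Gamma>2) \<Delta>"
    using h_complete less.prems by blast
  then show ?case using cut_step[of \<phi>] less.IH by blast
qed

theorem mainTheorem1:
  fixes \<Gamma>1 \<Gamma>2 :: "'a fm multiset" and \<phi> :: "'a fm" and \<Delta> :: "'a fm option"
  assumes "G3iLL \<Gamma>1 (Some \<phi>)"
      and "G3iLL (add_mset \<phi> \<Gamma>2) \<Delta>"
  shows "G3iLL (\<Gamma>1 + \<Gamma>2) \<Delta>"
  using cut[OF assms] .

end
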